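(* If $n\ge2$ and $q$ is a nonnegative integer with $q<\frac{n}{\log(n+1)+1}-1$, then $(1-1/e)(q+1)^n\le A(n,q)\le(q+1)^n$.
   Context: $A(n,q)$ is the Eulerian number, the number of permutations of $\{1,\dots,n\}$ with exactly $q$ ascents, with $A(n,q)=0$ if $q\ge n$; $\log$ is the natural logarithm. *)

theory Defs
  imports "HOL-Analysis.Analysis" "HOL-Combinatorics.Permutations"
begin

definition ascents :: "nat \<Rightarrow> (nat \<Rightarrow> nat) \<Rightarrow> nat set" where
  "ascents n \<sigma> = {i \<in> {1..<n}. \<sigma> i < \<sigma> (Suc i)}"

definition eulerian :: "nat \<Rightarrow> nat \<Rightarrow> nat" where
  "eulerian n q = card {\<sigma>. \<sigma> permutes {1..n} \<and> card (ascents n \<sigma>) = q}"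

end

theory Submission
  imports Defs "HOL-Combinatorics.Multiset_Permutations"
begin

fun asc :: "nat list \<Rightarrow> nat" where
  "asc (x # y # zs) = (if x < y then 1 else 0) + asc (y # zs)"
| "asc _ = 0"

lemma asc_Cons: "asc (a # R) = (if R \<noteq> [] \<and> a < hd R then 1 else 0) + asc R"
  by (cases R) auto

lemma asc_le: "asc xs \<le> length xs - 1"
  by (induction xs rule: asc.induct) auto

lemma asc_card: "asc xs = card {i. Suc i < length xs \<and> xs!i < xs!Suc i}"
proof (induction xs rule: asc.induct)
  case (1 x y zs)
  have eq: "{i. Suc i < length (x#y#zs) \<and> (x#y#zs)!i < (x#y#zs)!Suc i}
      = (if x < y then {0} else {}) \<union> Suc ` {i. Suc i < length (y#zs) \<and> (y#zs)!i < (y#zs)!Suc i}"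
    apply (auto simp: image_iff split: if_splits)
    apply (case_tac xa; auto)+
    done
  show ?case unfolding eq using 1 by (auto simp: card_image)
qed auto

definition ins :: "nat \<Rightarrow> nat \<Rightarrow> nat list \<Rightarrow> nat list" where
  "ins k x L = take k L @ x # drop k L"

definition dl :: "nat \<Rightarrow> nat list \<Rightarrow> nat" where
  "dl k L = (if k = 0 then 0 else if k = length L then 1 else if L!(k-1) < L!k then 0 else 1)"

lemma asc_ins: "(\<forall>a\<in>set L. a < x) \<Longrightarrow> k \<le> length L \<Longrightarrow> asc (ins k x L) = asc L + dl k L"
proof (induction L arbitrary: k)
  case Nil
  then show ?case by (simp add: ins_def dl_def)
next
  case (Cons a L)
  show ?case
  proof (cases k)
    case 0
    then show ?thesis using Cons.prems by (simp add: ins_def dl_def)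
  next
    case (Suc k')
    have ih: "asc (ins k' x L) = asc L + dl k' L" using Cons Suc by auto
    have e: "ins k x (a # L) = a # ins k' x L" by (simp add: Suc ins_def)
    show ?thesis
      using ih Cons.prems unfolding e asc_Cons[of a "ins k' x L"] asc_Cons[of a L]
      by (cases L; cases k'; auto simp: ins_def dl_def Suc hd_conv_nth nth_append)
  qed
qed

lemma card_dl0: "card {k. k \<le> length L \<and> dl k L = 0} = asc L + 1"
proof -
  have "{k. k \<le> length L \<and> dl k L = 0} = insert 0 (Suc ` {i. Suc i < length L \<and> L!i < L!Suc i})"
    apply (auto simp: dl_def image_iff split: if_splits)
    apply (case_tac x; auto)+
    done
  moreover have "finite {i. Suc i < length L \<and> L!i < L!Suc i}"
    by (rule finite_subset[of _ "{..<length L}"]) auto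
  ultimately show ?thesis by (simp add: card_image asc_card)
qed

lemma card_dl1: "card {k. k \<le> length L \<and> dl k L = 1} = length L - asc L"
proof -
  have u: "{..length L} = {k. k \<le> length L \<and> dl k L = 0} \<union> {k. k \<le> length L \<and> dl k L = 1}"
    by (auto simp: dl_def)
  have "card {..length L} = card {k. k \<le> length L \<and> dl k L = 0} + card {k. k \<le> length L \<and> dl k L = 1}"
    by (subst u, rule card_Un_disjoint) auto
  then show ?thesis using card_dl0[of L] by simp
qed

lemma card_slots: "card {k. k \<le> length L \<and> asc L + dl k L = q} =
   (if asc L = q then asc L + 1 else 0) + (if asc L + 1 = q then length L - asc L else 0)"
proof -
  have d01: "dl k L = 0 \<or> dl k L = 1" for k by (simp add: dl_def)
  have iff: "(asc L + dl k L = q) \<longleftrightarrow> (asc L = q \<and> dl k L = 0) \<or> (asc L + 1 = q \<and> dl k L = 1)" for k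
    using d01[of k] by auto
  show ?thesis
  proof (cases "asc L = q")
    case True
    then show ?thesis unfolding iff using card_dl0[of L] by simp
  next
    case False
    then show ?thesis unfolding iff using card_dl1[of L] by (cases "asc L + 1 = q") simp_all
  qed
qed

definition P :: "nat \<Rightarrow> nat list set" where "P m = permutations_of_set {1..m}"
definition E :: "nat \<Rightarrow> nat \<Rightarrow> nat" where "E m q = card {xs \<in> P m. asc xs = q}"

lemma P_len: "xs \<in> P m \<Longrightarrow> length xs = m"
  by (simp add: P_def length_finite_permutations_of_set)

lemma decomp: "{xs \<in> P (Suc m). asc xs = q} =
   (\<lambda>(L,k). ins k (Suc m) L) ` (SIGMA L:P m. {k. k \<le> length L \<and> asc L + dl k L = q})"
proof (intro equalityI subsetI)
  fix xs assume xs: "xs \<in> {xs \<in> P (Suc m). asc xs = q}"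
  then have "Suc m \<in> set xs" "distinct xs" "set xs = {1..Suc m}" by (auto simp: P_def permutations_of_set_def)
  then obtain ys zs where yz: "xs = ys @ Suc m # zs" by (meson split_list)
  define L where "L = ys @ zs"
  have d: "distinct (ys @ zs)" using \<open>distinct xs\<close> unfolding yz by auto
  have "set (ys @ zs) = set xs - {Suc m}" using \<open>distinct xs\<close> unfolding yz by auto
  also have "\<dots> = {1..m}" using \<open>set xs = _\<close> by auto
  finally have L: "L \<in> P m" using d unfolding L_def P_def permutations_of_set_def by auto
  have ins: "ins (length ys) (Suc m) L = xs" by (simp add: ins_def L_def yz)
  have lt: "\<forall>a\<in>set L. a < Suc m" using L by (auto simp: P_def permutations_of_set_def)
  have "asc L + dl (length ys) L = q" using asc_ins[OF lt, of "length ys"] ins xs by (simp add: L_def)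
  then show "xs \<in> (\<lambda>(L,k). ins k (Suc m) L) ` (SIGMA L:P m. {k. k \<le> length L \<and> asc L + dl k L = q})"
  proof -
    assume "asc L + dl (length ys) L = q"
    show ?thesis
  proof (rule image_eqI[of _ _ "(L, length ys)"])
    show "xs = (\<lambda>(L,k). ins k (Suc m) L) (L, length ys)" using ins by simp
    show "(L, length ys) \<in> (SIGMA L:P m. {k. k \<le> length L \<and> asc L + dl k L = q})"
      using L \<open>asc L + dl (length ys) L = q\<close> by (simp add: L_def)
  qed
  qed
next
  fix xs assume "xs \<in> (\<lambda>(L,k). ins k (Suc m) L) ` (SIGMA L:P m. {k. k \<le> length L \<and> asc L + dl k L = q})"
  then obtain L k where L: "L \<in> P m" "k \<le> length L" "asc L + dl k L = q" and xs: "xs = ins k (Suc m) L" by auto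
  have lt: "\<forall>a\<in>set L. a < Suc m" using L by (auto simp: P_def permutations_of_set_def)
  obtain t d where td: "L = t @ d" "xs = t @ Suc m # d"
    unfolding xs ins_def by (metis append_take_drop_id)
  have sL: "set L = {1..m}" "distinct L" using L by (auto simp: P_def permutations_of_set_def)
  have "set xs = insert (Suc m) (set L)" using td by auto
  also have "\<dots> = {1..Suc m}" using sL by auto
  finally have "set xs = {1..Suc m}" .
  moreover have "set t \<subseteq> {1..m}" "set d \<subseteq> {1..m}" using sL td by auto
  then have "Suc m \<notin> set t" "Suc m \<notin> set d" by auto
  moreover have "distinct xs" using sL td \<open>Suc m \<notin> set t\<close> \<open>Suc m \<notin> set d\<close> by auto
  ultimately have "set xs = {1..Suc m}" "distinct xs" by auto
  then show "xs \<in> {xs \<in> P (Suc m). asc xs = q}" using asc_ins[OF lt L(2)] L xs by (auto simp: P_def)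
qed

lemma decomp_inj: "inj_on (\<lambda>(L,k). ins k (Suc m) L) (SIGMA L:P m. {k. k \<le> length L \<and> asc L + dl k L = q})"
proof (rule inj_onI, clarsimp)
  fix L k L' k' assume A: "L \<in> P m" "k \<le> length L" "L' \<in> P m" "k' \<le> length L'" "ins k (Suc m) L = ins k' (Suc m) L'"
  have n1: "Suc m \<notin> set L" "Suc m \<notin> set L'" using A by (auto simp: P_def permutations_of_set_def)
  have n2: "Suc m \<notin> set (take k L)" "Suc m \<notin> set (drop k L)" "Suc m \<notin> set (take k' L')"
    using n1 by (meson in_set_takeD in_set_dropD)+
  from A(5) have "take k L = take k' L' \<and> drop k L = drop k' L'"
    unfolding ins_def using append_Cons_eq_iff[OF n2(1,2)] n2(3) by simp
  then show "L = L' \<and> k = k'" using A(2,4)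
  proof -
    assume h: "take k L = take k' L' \<and> drop k L = drop k' L'"
    then have "L = L'" by (metis append_take_drop_id)
    moreover have "k = k'" using h A(2,4) by (metis length_take min.absorb2)
    ultimately show ?thesis by simp
  qed
qed

lemma sum_if_const: "finite A \<Longrightarrow> (\<Sum>x\<in>A. if p x then (c::nat) else 0) = c * card {x\<in>A. p x}"
  by (simp add: sum.inter_filter[symmetric])

lemma E_rec: "E (Suc m) q = (q+1) * E m q + (if q = 0 then 0 else (m+1-q) * E m (q-1))"
proof -
  have "E (Suc m) q = (\<Sum>L\<in>P m. card {k. k \<le> length L \<and> asc L + dl k L = q})"
    unfolding E_def decomp by (subst card_image[OF decomp_inj], subst card_SigmaI) (auto simp: P_def)
  also have "\<dots> = (\<Sum>L\<in>P m. (if asc L = q then q + 1 else 0) + (if asc L + 1 = q then m + 1 - q else 0))"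
    by (rule sum.cong[OF refl], subst card_slots, auto simp: P_len)
  also have "\<dots> = (q+1) * E m q + (if q = 0 then 0 else (m+1-q) * E m (q-1))"
  proof -
    have fin: "finite (P m)" by (simp add: P_def)
    have "(\<Sum>L\<in>P m. (if asc L = q then q + 1 else 0) + (if asc L + 1 = q then m + 1 - q else 0))
      = (q+1) * E m q + (m+1-q) * card {L\<in>P m. asc L + 1 = q}"
      by (simp only: sum.distrib sum_if_const[OF fin] E_def)
    moreover have "q > 0 \<Longrightarrow> {L\<in>P m. asc L + 1 = q} = {L\<in>P m. asc L = q - 1}" by auto
    ultimately show ?thesis by (cases "q = 0") (simp_all add: E_def)
  qed
  finally show ?thesis .
qed

lemma E0: "E 0 j = (if j = 0 then 1 else 0)"
proof -
  have "{xs \<in> P 0. asc xs = j} = (if j = 0 then {[]} else {})" by (auto simp: P_def)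
  then show ?thesis by (simp add: E_def)
qed

lemma E_nz: "E m i \<noteq> 0 \<Longrightarrow> i \<le> m"
proof -
  assume "E m i \<noteq> 0"
  then obtain xs where "xs \<in> P m" "asc xs = i" unfolding E_def
    by (metis (mono_tags, lifting) card.empty empty_Collect_eq)
  then show "i \<le> m" using asc_le[of xs] P_len[of xs m] by simp
qed

lemma choose_absorb: "(k+1) * (n choose (k+1)) = (n - k) * (n choose k)"
  using binomial_absorption[of k n] binomial_absorb_comp[of n k] by simp

lemma bin_id: "j \<le> m \<Longrightarrow> j \<le> q \<Longrightarrow>
  (j+1)*((q+m+1-j) choose (m+1)) + (m-j)*((q+m-j) choose (m+1)) = (q+1)*((q+m-j) choose m)"
proof -
  assume jm: "j \<le> m" and jq: "j \<le> q"
  define M where "M = q+m-j"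
  define a where "a = M choose m"
  define b where "b = M choose (m+1)"
  have e1: "q+m+1-j = Suc M" using jq by (simp add: M_def)
  have e2: "(Suc M choose (m+1)) = a + b" by (simp add: a_def b_def)
  have e3: "(m+1) * b = (q-j) * a" using choose_absorb[of m M] jq by (simp add: a_def b_def M_def)
  have "(j+1)*(a+b) + (m-j)*b = (j+1)*a + ((j+1) + (m-j))*b" by (simp add: algebra_simps)
  also have "(j+1) + (m-j) = m+1" using jm by simp
  also have "(j+1)*a + (m+1)*b = ((j+1) + (q-j))*a" using e3 by (simp add: algebra_simps)
  also have "(j+1) + (q-j) = q+1" using jq by simp
  finally show ?thesis unfolding e1 e2 by (simp add: M_def a_def b_def)
qed

lemma shift_sum: "(\<Sum>j\<le>(q::nat). if j = 0 then 0 else h (j-1)) = (\<Sum>i<q. (h i::nat))"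
proof (cases q)
  case 0 then show ?thesis by simp
next
  case (Suc p)
  then show ?thesis unfolding Suc sum.atMost_Suc_shift by (simp add: lessThan_Suc_atMost)
qed

lemma worp: "(\<Sum>j\<le>q. E n j * ((q+n-j) choose n)) = (q+1)^n"
proof (induction n arbitrary: q)
  case 0
  then show ?case by (simp add: E0)
next
  case (Suc m)
  define h where "h i = (m-i) * E m i * ((q+m-i) choose (m+1))" for i
  have "(\<Sum>j\<le>q. E (Suc m) j * ((q+Suc m-j) choose Suc m)) =
     (\<Sum>j\<le>q. (j+1) * E m j * ((q+m+1-j) choose (m+1)) + (if j = 0 then 0 else h (j-1)))"
  proof (rule sum.cong[OF refl])
    fix j assume j: "j \<in> {..q}"
    have "q + Suc m - j = q+m+1-j" by simp
    moreover have "j \<noteq> 0 \<Longrightarrow> (m + 1 - j) * E m (j - 1) * ((q+m+1-j) choose (m+1)) = h (j-1)"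
      using j by (simp add: h_def)
    ultimately show "E (Suc m) j * ((q+Suc m-j) choose Suc m) =
      (j+1) * E m j * ((q+m+1-j) choose (m+1)) + (if j = 0 then 0 else h (j-1))"
      unfolding E_rec by (auto simp: algebra_simps)
  qed
  also have "\<dots> = (\<Sum>j\<le>q. (j+1) * E m j * ((q+m+1-j) choose (m+1))) + (\<Sum>i<q. h i)"
    by (simp add: sum.distrib shift_sum)
  also have "(\<Sum>i<q. h i) = (\<Sum>i\<le>q. h i)"
    by (simp add: h_def lessThan_Suc_atMost[symmetric])
  also have "(\<Sum>j\<le>q. (j+1) * E m j * ((q+m+1-j) choose (m+1))) + (\<Sum>i\<le>q. h i)
     = (\<Sum>j\<le>q. (q+1) * (E m j * ((q+m-j) choose m)))"
    unfolding sum.distrib[symmetric]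
  proof (rule sum.cong[OF refl])
    fix j assume j: "j \<in> {..q}"
    show "(j+1) * E m j * ((q+m+1-j) choose (m+1)) + h j = (q+1) * (E m j * ((q+m-j) choose m))"
    proof (cases "E m j = 0")
      case True then show ?thesis by (simp add: h_def)
    next
      case False
      then have "j \<le> m" by (rule E_nz)
      from bin_id[OF this] j have "(j+1)*((q+m+1-j) choose (m+1)) + (m-j)*((q+m-j) choose (m+1)) = (q+1)*((q+m-j) choose m)"
        by simp
      then have "E m j * ((j+1)*((q+m+1-j) choose (m+1)) + (m-j)*((q+m-j) choose (m+1))) = E m j * ((q+1)*((q+m-j) choose m))"
        by simp
      then show ?thesis by (simp add: h_def algebra_simps)
    qed
  qed
  also have "\<dots> = (q+1) * (\<Sum>j\<le>q. E m j * ((q+m-j) choose m))"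
    by (rule sum_distrib_left[symmetric])
  also have "\<dots> = (q+1) * (q+1)^m" using Suc.IH[of q] by simp
  finally show ?case by simp
qed

lemma E_upper: "E n q \<le> (q+1)^n"
proof -
  have "E n q * ((q+n-q) choose n) \<le> (\<Sum>j\<le>q. E n j * ((q+n-j) choose n))"
    by (rule member_le_sum) auto
  then show ?thesis using worp[of n q] by simp
qed

lemma choose_le: "n \<le> M \<Longrightarrow> (Suc M choose n) \<le> (n+1) * (M choose n)"
proof (cases n)
  case 0 then show ?thesis by simp
next
  case (Suc k)
  assume nM: "n \<le> M"
  have "(k+1) * (M choose (k+1)) = (M-k) * (M choose k)" by (rule choose_absorb)
  moreover have "M - k \<ge> 1" using nM Suc by simp
  ultimately have "(M choose k) \<le> (k+1) * (M choose (k+1))"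
    by (metis mult_1 mult_le_mono1)
  then show ?thesis using Suc by simp
qed

lemma E_lower: "(q+1)^n \<le> E n q + (n+1) * q^n"
proof (cases q)
  case 0
  then show ?thesis using worp[of n 0] by simp
next
  case (Suc p)
  have "(q+1)^n = (\<Sum>j\<le>p. E n j * ((q+n-j) choose n)) + E n q"
    using worp[of n q] by (simp add: Suc)
  also have "(\<Sum>j\<le>p. E n j * ((q+n-j) choose n)) \<le> (\<Sum>j\<le>p. (n+1) * (E n j * ((p+n-j) choose n)))"
  proof (rule sum_mono)
    fix j assume j: "j \<in> {..p}"
    have "q+n-j = Suc (p+n-j)" using j Suc by auto
    moreover have "((Suc (p+n-j)) choose n) \<le> (n+1) * ((p+n-j) choose n)"
      by (rule choose_le) (use j in auto)
    ultimately show "E n j * ((q+n-j) choose n) \<le> (n+1) * (E n j * ((p+n-j) choose n))"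
      by (metis mult.left_commute mult_le_mono2)
  qed
  also have "(\<Sum>j\<le>p. (n+1) * (E n j * ((p+n-j) choose n))) = (n+1) * q^n"
    by (subst sum_distrib_left[symmetric]) (simp add: worp[of n p] Suc)
  finally show ?thesis by simp
qed

lemma asc_map: "asc (map \<sigma> [1..<Suc n]) = card (ascents n \<sigma>)"
proof -
  have "asc (map \<sigma> [1..<Suc n]) = card {i. Suc i < n \<and> \<sigma> (Suc i) < \<sigma> (Suc (Suc i))}"
    unfolding asc_card by (rule arg_cong[where f=card]) (auto simp del: upt_Suc)
  also have "\<dots> = card (Suc ` {i. Suc i < n \<and> \<sigma> (Suc i) < \<sigma> (Suc (Suc i))})"
    by (simp add: card_image)
  also have "Suc ` {i. Suc i < n \<and> \<sigma> (Suc i) < \<sigma> (Suc (Suc i))} = ascents n \<sigma>"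
    unfolding ascents_def
    apply (auto simp: image_iff)
    apply (case_tac x; auto)
    done
  finally show ?thesis .
qed

lemma eulerian_E: "eulerian n q = E n q"
proof -
  define f where "f \<sigma> = map \<sigma> [1..<Suc n]" for \<sigma> :: "nat \<Rightarrow> nat"
  define S where "S = {\<sigma>. \<sigma> permutes {1..n} \<and> card (ascents n \<sigma>) = q}"
  have inj: "inj_on f S"
  proof (rule inj_onI)
    fix \<sigma> \<tau> assume A: "\<sigma> \<in> S" "\<tau> \<in> S" "f \<sigma> = f \<tau>"
    show "\<sigma> = \<tau>"
    proof
      fix x
      show "\<sigma> x = \<tau> x"
      proof (cases "x \<in> {1..n}")
        case True
        then have "f \<sigma> ! (x - 1) = \<sigma> x" "f \<tau> ! (x - 1) = \<tau> x"
          by (auto simp: f_def simp del: upt_Suc)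
        then show ?thesis using A(3) by simp
      next
        case False
        have sp: "\<sigma> permutes {1..n}" "\<tau> permutes {1..n}" using A(1,2) by (auto simp: S_def)
        show ?thesis using permutes_not_in[OF sp(1) False] permutes_not_in[OF sp(2) False] by simp
      qed
    qed
  qed
  have img: "f ` S = {xs \<in> P n. asc xs = q}"
  proof (intro equalityI subsetI)
    fix xs assume "xs \<in> f ` S"
    then obtain \<sigma> where s: "\<sigma> permutes {1..n}" "card (ascents n \<sigma>) = q" "xs = f \<sigma>" by (auto simp: S_def)
    have "distinct xs" using s permutes_inj_on[OF s(1)]
      by (simp add: f_def distinct_map atLeastLessThanSuc_atLeastAtMost del: upt_Suc)
    moreover have "set xs = {1..n}" using s permutes_image[OF s(1)]
      by (simp add: f_def atLeastLessThanSuc_atLeastAtMost del: upt_Suc)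
    ultimately show "xs \<in> {xs \<in> P n. asc xs = q}" using s asc_map[of \<sigma> n]
      by (simp add: P_def permutations_of_set_def f_def)
  next
    fix xs assume "xs \<in> {xs \<in> P n. asc xs = q}"
    then have xs: "distinct xs" "set xs = {1..n}" "asc xs = q" and len: "length xs = n"
      by (auto simp: P_def permutations_of_set_def P_len)
    define \<tau> where "\<tau> i = (if i \<in> {1..n} then xs ! (i - 1) else i)" for i
    have fx: "f \<tau> = xs"
      by (rule nth_equalityI) (auto simp: f_def len \<tau>_def simp del: upt_Suc)
    have "inj_on \<tau> {1..n}"
    proof (rule inj_onI)
      fix a b assume "a \<in> {1..n}" "b \<in> {1..n}" "\<tau> a = \<tau> b"
      then have "xs ! (a-1) = xs ! (b-1)" "a - 1 < length xs" "b - 1 < length xs" by (auto simp: \<tau>_def len)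
      then have "a - 1 = b - 1" using xs(1) nth_eq_iff_index_eq by blast
      then show "a = b" using \<open>a \<in> {1..n}\<close> \<open>b \<in> {1..n}\<close> by auto
    qed
    moreover have "\<tau> ` {1..n} = {1..n}"
    proof -
      have "\<tau> ` {1..n} = set (f \<tau>)" by (simp add: f_def atLeastLessThanSuc_atLeastAtMost del: upt_Suc)
      then show ?thesis using fx xs(2) by simp
    qed
    ultimately have "\<tau> permutes {1..n}"
      by (intro bij_imp_permutes) (auto simp: bij_betw_def \<tau>_def)
    moreover have "card (ascents n \<tau>) = q" using asc_map[of \<tau> n] fx xs(3) by (simp add: f_def)
    ultimately show "xs \<in> f ` S" using fx by (auto simp: S_def)
  qed
  have "eulerian n q = card S" by (simp add: eulerian_def S_def)
  also have "\<dots> = card (f ` S)" by (rule card_image[symmetric, OF inj])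
  also have "\<dots> = E n q" by (simp add: img E_def)
  finally show ?thesis .
qed

lemma key_ineq:
  fixes n q :: nat
  assumes q: "q \<ge> 1" and h: "real q < real n / (ln (real n + 1) + 1) - 1"
  shows "(real n + 1) * exp 1 * real q ^ n \<le> (real q + 1) ^ n"
proof -
  define L where "L = ln (real n + 1)"
  have L0: "L \<ge> 0" by (simp add: L_def)
  have "real q + 1 < real n / (L + 1)" using h by (simp add: L_def)
  then have "(real q + 1) * (L + 1) < real n" using L0 by (simp add: field_simps)
  then have A: "L + 1 < real n / (real q + 1)" by (simp add: field_simps)
  have qp: "real q > 0" using q by simp
  have "ln (real q / (real q + 1)) \<le> real q / (real q + 1) - 1"
    by (rule ln_le_minus_one) (use qp in simp)
  also have "\<dots> = - 1 / (real q + 1)" using qp by (simp add: field_simps)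
  finally have B: "ln ((real q + 1) / real q) \<ge> 1 / (real q + 1)"
    using qp by (simp add: ln_div)
  have "L + 1 \<le> real n * ln ((real q + 1) / real q)"
  proof -
    have "real n / (real q + 1) = real n * (1 / (real q + 1))" by simp
    also have "\<dots> \<le> real n * ln ((real q + 1) / real q)" using B by (intro mult_left_mono) auto
    finally show ?thesis using A by simp
  qed
  then have "exp (L + 1) \<le> exp (real n * ln ((real q + 1) / real q))" by simp
  also have "\<dots> = exp (ln (((real q + 1) / real q) ^ n))" using qp by (simp add: ln_realpow)
  also have "\<dots> = ((real q + 1) / real q) ^ n" using qp by simp
  finally have "(real n + 1) * exp 1 \<le> ((real q + 1) / real q) ^ n"
    by (simp add: L_def exp_add)
  then have "(real n + 1) * exp 1 * real q ^ n \<le> ((real q + 1) / real q) ^ n * real q ^ n"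
    by (rule mult_right_mono) simp
  also have "\<dots> = (real q + 1) ^ n" using qp by (simp add: power_divide)
  finally show ?thesis .
qed

theorem mainTheorem19:
  fixes n q :: nat
  assumes "n \<ge> 2"
    and "real q < real n / (ln (real n + 1) + 1) - 1"
  shows "(1 - 1 / exp 1) * (real q + 1) ^ n \<le> real (eulerian n q)
         \<and> real (eulerian n q) \<le> (real q + 1) ^ n"
proof
  have up: "E n q \<le> (q+1)^n" by (rule E_upper)
  then show "real (eulerian n q) \<le> (real q + 1) ^ n"
    unfolding eulerian_E by (metis of_nat_1 of_nat_add of_nat_le_iff of_nat_power)
  have lo: "real ((q+1)^n) \<le> real (E n q + (n+1) * q^n)"
    using E_lower[of q n] by linarith
  then have lo': "(real q + 1) ^ n \<le> real (E n q) + (real n + 1) * real q ^ n" by (simp add: algebra_simps)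
  show "(1 - 1 / exp 1) * (real q + 1) ^ n \<le> real (eulerian n q)"
  proof (cases "q = 0")
    case True
    have z: "(0::real) ^ n = 0" using assms(1) by simp
    have "1 \<le> real (E n q)" using lo' True z by simp
    moreover have "1 / exp 1 > (0::real)" by simp
    ultimately have "1 - 1 / exp 1 \<le> real (E n q)" by linarith
    then show ?thesis using True unfolding eulerian_E by simp
  next
    case False
    then have k: "(real n + 1) * exp 1 * real q ^ n \<le> (real q + 1) ^ n"
      using key_ineq assms(2) by simp
    have "(real n + 1) * real q ^ n \<le> (real q + 1) ^ n / exp 1"
      using k by (simp add: field_simps)
    then show ?thesis using lo' unfolding eulerian_E by (simp add: algebra_simps)
  qed
qed

end
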